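(* Let $\Omega\colon\mathbb{R}\to\mathbb{R}_+$ be a continual diagram and let $a<a_0<b_0<b$ be real numbers such that the restriction of $\Omega$ to $[a,b]$ is $(1-\delta)$-Lipschitz for some constant $\delta>0$ and the restriction of $\mu_\Omega$ to $[a,b]$ is absolutely continuous with a density bounded from above by some constant. For $z_0\in\mathbb{R}$ and $\epsilon>0$ let $z_+^{\max}=z_+^{\max}(z_0,\epsilon)$ denote the maximal solution $z$ of the equation \[\Omega(z-\epsilon)-\Omega(z_0-\epsilon)=z-z_0-2\epsilon.\] Then there exists a constant $\epsilon_0>0$ such that for each $z_0\in[a_0,b_0]$ and each $\epsilon\in(0,\epsilon_0)$, \[z_+^{\max}-z_0\le\frac{2\epsilon}{\delta}.\]
   Context: A continual diagram is a function $\omega\colon\mathbb{R}\to\mathbb{R}_+$ such that $|\omega(z_1)-\omega(z_2)|\le|z_1-z_2|$ for all $z_1,z_2$, and $\omega(z)=|z|$ for all sufficiently large $|z|$. Its transition measure $\mu_\omega$ is the probability measure whose Cauchy transform $\mathbf{G}_\omega(z)=\int\frac{d\mu_\omega(x)}{z-x}$ satisfies $\log[z\,\mathbf{G}_\omega(z)]=-\int_{-\infty}^\infty\frac{1}{z-w}\big(\frac{\omega(w)-|w|}{2}\big)'\,dw$ for $z\in\mathbb{C}\setminus\mathbb{R}$. *)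

theory Defs
  imports "HOL-Probability.Probability"
begin

definition continual_diagram :: "(real \<Rightarrow> real) \<Rightarrow> bool" where
  "continual_diagram \<omega> \<longleftrightarrow>
     (\<forall>z. 0 \<le> \<omega> z) \<and>
     (\<forall>z1 z2. \<bar>\<omega> z1 - \<omega> z2\<bar> \<le> \<bar>z1 - z2\<bar>) \<and>
     (\<exists>R. \<forall>z. R \<le> \<bar>z\<bar> \<longrightarrow> \<omega> z = \<bar>z\<bar>)"

definition cauchy_transform :: "real measure \<Rightarrow> complex \<Rightarrow> complex" where
  "cauchy_transform \<mu> z = (\<integral>x. 1 / (z - complex_of_real x) \<partial>\<mu>)"

text \<open>\<mu> is the transition measure of \<omega>: a Borel probability measure on the real line with
  log(z G(z)) = - \<integral> (z-w)^(-1) \<sigma>'(w) dw, where \<sigma> w = (\<omega> w - |w|)/2 and \<sigma>' is its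
  (a.e.) derivative, represented by a function g with \<sigma> y - \<sigma> x = \<integral>_x^y g.
  The logarithmic identity is written in exponentiated form to avoid branch issues.\<close>
definition transition_measure :: "(real \<Rightarrow> real) \<Rightarrow> real measure \<Rightarrow> bool" where
  "transition_measure \<omega> \<mu> \<longleftrightarrow>
     prob_space \<mu> \<and> sets \<mu> = sets borel \<and>
     (\<exists>g :: real \<Rightarrow> real.
        (\<forall>x y. x \<le> y \<longrightarrow>
           (g has_integral ((\<omega> y - \<bar>y\<bar>) / 2 - (\<omega> x - \<bar>x\<bar>) / 2)) {x..y}) \<and>
        (\<forall>z. Im z \<noteq> 0 \<longrightarrow>
           z * cauchy_transform \<mu> z =
             exp (- integral UNIV (\<lambda>w. complex_of_real (g w) / (z - complex_of_real w)))))"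

definition z_plus_max :: "(real \<Rightarrow> real) \<Rightarrow> real \<Rightarrow> real \<Rightarrow> real" where
  "z_plus_max \<Omega> z0 \<epsilon> =
     (GREATEST z. \<Omega> (z - \<epsilon>) - \<Omega> (z0 - \<epsilon>) = z - z0 - 2 * \<epsilon>)"

end

theory Submission
  imports Defs
begin

lemma sol_bound:
  fixes \<Omega> :: "real \<Rightarrow> real" and a b0 b \<delta> z0 \<epsilon> z :: real
  assumes L1: "\<forall>z1 z2. \<bar>\<Omega> z1 - \<Omega> z2\<bar> \<le> \<bar>z1 - z2\<bar>"
    and lip: "\<forall>x\<in>{a..b}. \<forall>y\<in>{a..b}. \<bar>\<Omega> x - \<Omega> y\<bar> \<le> (1 - \<delta>) * \<bar>x - y\<bar>"
    and delta: "\<delta> > 0" and e: "0 < \<epsilon>" "\<epsilon> < \<delta> * (b - b0) / 2"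
    and z0: "a \<le> z0 - \<epsilon>" "z0 \<le> b0" "b0 < b"
    and sol: "\<Omega> (z - \<epsilon>) - \<Omega> (z0 - \<epsilon>) = z - z0 - 2 * \<epsilon>"
  shows "z - z0 \<le> 2 * \<epsilon> / \<delta>"
proof (cases "z \<le> z0")
  case True
  have "0 \<le> 2 * \<epsilon> / \<delta>" using e delta by simp
  then show ?thesis using True by linarith
next
  case False
  show ?thesis
  proof (cases "z - \<epsilon> \<le> b")
    case True
    have "\<bar>\<Omega> (z - \<epsilon>) - \<Omega> (z0 - \<epsilon>)\<bar> \<le> (1 - \<delta>) * \<bar>(z - \<epsilon>) - (z0 - \<epsilon>)\<bar>"
      using lip[rule_format, of "z-\<epsilon>" "z0-\<epsilon>"] True False z0 by auto
    then have "z - z0 - 2 * \<epsilon> \<le> (1 - \<delta>) * (z - z0)" using sol False by auto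
    then have "\<delta> * (z - z0) \<le> 2 * \<epsilon>" by (simp add: algebra_simps)
    then show ?thesis using delta by (simp add: field_simps mult.commute)
  next
    case False2: False
    have A: "\<Omega> (z - \<epsilon>) - \<Omega> b \<le> z - \<epsilon> - b" using L1[rule_format, of "z-\<epsilon>" b] False2 by auto
    have B: "\<Omega> b - \<Omega> (z0 - \<epsilon>) \<le> (1 - \<delta>) * (b - (z0 - \<epsilon>))"
      using lip[rule_format, of b "z0-\<epsilon>"] z0 e by auto
    have "\<delta> * (b - z0 + \<epsilon>) \<le> 2 * \<epsilon>" using A B sol by (simp add: algebra_simps)
    moreover have "\<delta> * (b - b0) \<le> \<delta> * (b - z0 + \<epsilon>)" using delta z0 e by (intro mult_left_mono) auto
    ultimately have False using e by linarith
    then show ?thesis ..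
  qed
qed

theorem lemma7p1:
  fixes \<Omega> :: "real \<Rightarrow> real" and \<mu> :: "real measure"
    and a a0 b0 b \<delta> :: real
  assumes diag: "continual_diagram \<Omega>"
    and tm: "transition_measure \<Omega> \<mu>"
    and ord: "a < a0" "a0 < b0" "b0 < b"
    and delta: "\<delta> > 0"
    and lip: "\<forall>x\<in>{a..b}. \<forall>y\<in>{a..b}. \<bar>\<Omega> x - \<Omega> y\<bar> \<le> (1 - \<delta>) * \<bar>x - y\<bar>"
    and dens: "\<exists>f :: real \<Rightarrow> real. \<exists>C. f \<in> borel_measurable borel \<and>
                 (\<forall>x. 0 \<le> f x \<and> f x \<le> C) \<and>
                 (\<forall>A \<in> sets borel. A \<subseteq> {a..b} \<longrightarrow>
                    emeasure \<mu> A = (\<integral>\<^sup>+ x. ennreal (f x) * indicator A x \<partial>lborel))"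
  shows "\<exists>\<epsilon>0 > 0. \<forall>z0 \<in> {a0..b0}. \<forall>\<epsilon>. 0 < \<epsilon> \<and> \<epsilon> < \<epsilon>0 \<longrightarrow>
           z_plus_max \<Omega> z0 \<epsilon> - z0 \<le> 2 * \<epsilon> / \<delta>"
proof -
  have L1: "\<forall>z1 z2. \<bar>\<Omega> z1 - \<Omega> z2\<bar> \<le> \<bar>z1 - z2\<bar>" using diag unfolding continual_diagram_def by blast
  have cont: "continuous_on UNIV \<Omega>"
    by (rule lipschitz_on_continuous_on[of 1], rule lipschitz_onI) (use L1 in \<open>auto simp: dist_real_def\<close>)
  define e0 where "e0 = min (a0 - a) (\<delta> * (b - b0) / 2)"
  have e0: "e0 > 0" using ord delta by (simp add: e0_def)
  show ?thesis
  proof (intro exI[of _ e0] conjI e0 ballI allI impI)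
    fix z0 \<epsilon> assume z0: "z0 \<in> {a0..b0}" and e: "0 < \<epsilon> \<and> \<epsilon> < e0"
    define h where "h z = \<Omega> (z - \<epsilon>) - \<Omega> (z0 - \<epsilon>) - (z - z0 - 2 * \<epsilon>)" for z
    define S where "S = {z. \<Omega> (z - \<epsilon>) - \<Omega> (z0 - \<epsilon>) = z - z0 - 2 * \<epsilon>}"
    have hc: "continuous_on UNIV h" unfolding h_def
      by (intro continuous_intros continuous_on_compose2[OF cont]) auto
    have ea: "a \<le> z0 - \<epsilon>" "\<epsilon> < \<delta> * (b - b0) / 2" using z0 e by (auto simp: e0_def)
    have bnd: "z - z0 \<le> 2 * \<epsilon> / \<delta>" if "z \<in> S" for z
      using sol_bound[OF L1 lip delta, of \<epsilon> b0 z0 z] that ea e z0 ord unfolding S_def by auto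
    have h0: "h z0 = 2 * \<epsilon>" unfolding h_def by simp
    have hb: "h (b + \<epsilon>) \<le> 0"
    proof -
      have B: "\<Omega> b - \<Omega> (z0 - \<epsilon>) \<le> (1 - \<delta>) * (b - (z0 - \<epsilon>))"
        using lip[rule_format, of b "z0-\<epsilon>"] z0 e ea ord by auto
      have "\<delta> * (b - b0) \<le> \<delta> * (b - z0 + \<epsilon>)" using delta z0 e by (intro mult_left_mono) auto
      then show ?thesis using B ea unfolding h_def by (simp add: algebra_simps)
    qed
    have zb: "z0 \<le> b + \<epsilon>" using z0 e ord by auto
    obtain x where "h x = 0" using IVT2'[of h "b+\<epsilon>" 0 z0, OF hb _ zb] h0 e continuous_on_subset[OF hc]
      by auto
    then have Sne: "S \<noteq> {}" unfolding S_def h_def by auto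
    have Scl: "closed S"
    proof -
      have "S = {z. h z = 0}" unfolding S_def h_def by auto
      then show ?thesis using closed_Collect_eq[OF hc continuous_on_const] by simp
    qed
    have Sbd: "bdd_above S" using bnd by (intro bdd_aboveI[of _ "z0 + 2 * \<epsilon> / \<delta>"]) force
    have SS: "Sup S \<in> S" using closed_contains_Sup[OF Sne Sbd Scl] .
    have "z_plus_max \<Omega> z0 \<epsilon> = Sup S" unfolding z_plus_max_def
    proof (rule Greatest_equality)
      show "\<Omega> (Sup S - \<epsilon>) - \<Omega> (z0 - \<epsilon>) = Sup S - z0 - 2 * \<epsilon>" using SS unfolding S_def by simp
    next
      fix y assume "\<Omega> (y - \<epsilon>) - \<Omega> (z0 - \<epsilon>) = y - z0 - 2 * \<epsilon>"
      then have "y \<in> S" unfolding S_def by simp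
      then show "y \<le> Sup S" using Sbd by (rule cSup_upper)
    qed
    then show "z_plus_max \<Omega> z0 \<epsilon> - z0 \<le> 2 * \<epsilon> / \<delta>" using bnd[OF SS] by simp
  qed
qed

end
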